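(* Let $\gamma>0$ and let ${}_1R^\gamma$, ${}_2R^\gamma$ be independent Bessel processes of dimension $\gamma$ started at $0$. Put $I_R(t)={}_1R^\gamma({}_2R^\gamma(t))$, $t>0$, and let $q(r,t)$ be its density, i.e. $$q(r,t)=\int_0^\infty p(r,s)\,p(s,t)\,ds,\qquad p(r,t)=\frac{2\,r^{\gamma-1}e^{-r^2/(2t)}}{(2t)^{\gamma/2}\Gamma(\gamma/2)}\quad (r\ge 0,\ t>0).$$ Then for every $t>0$ and every complex $\eta$ with $\Re\{\eta\}>1-\gamma$, $$\int_0^\infty r^{\eta-1}q(r,t)\,dr=E\{I_R(t)\}^{\eta-1}=(2^3t)^{\frac{\eta-1}{4}}\,\frac{\Gamma\left(\frac{\gamma+\eta-1}{2}\right)\Gamma\left(\frac{2\gamma+\eta-1}{4}\right)}{\Gamma^2\left(\frac{\gamma}{2}\right)}.$$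
   Context: A Bessel process $R^\gamma$ of dimension $\gamma>0$ started at $0$ is the diffusion on $[0,\infty)$ with generator $\frac12\left(\frac{\partial^2}{\partial x^2}+\frac{\gamma-1}{x}\frac{\partial}{\partial x}\right)$; its density at time $t>0$ is $p(r,t)$ given in the claim. *)

theory Defs
  imports "HOL-Analysis.Analysis"
begin

definition bessel_density :: "real \<Rightarrow> real \<Rightarrow> real \<Rightarrow> real" where
  "bessel_density \<gamma> r t =
     2 * r powr (\<gamma> - 1) * exp (- (r\<^sup>2) / (2 * t)) / ((2 * t) powr (\<gamma> / 2) * Gamma (\<gamma> / 2))"

definition iterated_bessel_density :: "real \<Rightarrow> real \<Rightarrow> real \<Rightarrow> real" where
  "iterated_bessel_density \<gamma> r t =
     (LBINT s:{0<..}. bessel_density \<gamma> r s * bessel_density \<gamma> s t)"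

end

theory Submission
  imports Defs
begin


lemma cpowr_pos: "x > 0 \<Longrightarrow> complex_of_real x powr z = exp (z * of_real (ln x))"
  by (simp add: powr_def Ln_of_real)

lemma gm_eq:
  fixes a :: complex and c x :: real
  assumes c: "c > 0" and x0: "x > 0"
  shows "of_real (\<bar>2 * x / c\<bar>) * (of_real (x\<^sup>2 / c) powr (a/2 - 1) / of_real (exp (x\<^sup>2 / c)))
     = (2 * of_real c powr (- a/2)) * (of_real x powr (a - 1) * of_real (exp (- (x\<^sup>2) / c)))"
proof -
  define lx where "lx = complex_of_real (ln x)"
  define lc where "lc = complex_of_real (ln c)"
  define q where "q = complex_of_real (x\<^sup>2 / c)"
  have l2: "complex_of_real (ln (x\<^sup>2 / c)) = 2 * lx - lc"
    using x0 c by (simp add: lx_def lc_def ln_div ln_mult power2_eq_square)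
  have p: "of_real (x\<^sup>2 / c) powr (a/2 - 1) = exp ((a/2-1)*(2*lx - lc))"
    using x0 c by (subst cpowr_pos) (auto simp: l2)
  have e: "complex_of_real (exp (x\<^sup>2 / c)) = exp q" unfolding q_def exp_of_real ..
  have e2: "complex_of_real (exp (- (x\<^sup>2) / c)) = exp (-q)"
  proof -
    have "complex_of_real (exp (- (x\<^sup>2) / c)) = inverse (complex_of_real (exp (x\<^sup>2 / c)))"
      by (simp add: exp_minus inverse_eq_divide)
    then show ?thesis by (simp only: e exp_minus)
  qed
  have ox: "complex_of_real x = exp lx" using x0 by (simp add: lx_def exp_of_real)
  have oc: "complex_of_real c = exp lc" using c by (simp add: lc_def exp_of_real)
  have t: "complex_of_real (\<bar>2 * x / c\<bar>) = 2 * exp lx / exp lc"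
    using x0 c by (simp add: ox[symmetric] oc[symmetric])
  have p2: "of_real c powr (- a/2) = exp (-a/2 * lc)" using c by (simp add: cpowr_pos lc_def)
  have p3: "of_real x powr (a - 1) = exp ((a-1) * lx)" using x0 by (simp add: cpowr_pos lx_def)
  have "of_real (\<bar>2 * x / c\<bar>) * (of_real (x\<^sup>2 / c) powr (a/2 - 1) / of_real (exp (x\<^sup>2 / c)))
      = 2 * exp lx / exp lc * (exp ((a/2-1)*(2*lx - lc)) / exp q)"
    by (simp only: p e t)
  also have "\<dots> = 2 * exp (lx - lc + (a/2-1)*(2*lx - lc) - q)"
    by (simp add: exp_add exp_diff)
  also have "lx - lc + (a/2-1)*(2*lx - lc) - q = -a/2 * lc + ((a-1)*lx + -q)"
    by (simp add: algebra_simps)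
  also have "2 * exp (-a/2 * lc + ((a-1)*lx + -q)) = (2 * exp (-a/2 * lc)) * (exp ((a-1) * lx) * exp (-q))"
    by (simp only: exp_add mult.assoc)
  finally show ?thesis by (simp only: p2 p3 e2)
qed

lemma gauss_mellin_HK:
  fixes a :: complex and c :: real
  assumes a: "Re a > 0" and c: "c > 0"
  shows "(\<lambda>x::real. of_real x powr (a - 1) * of_real (exp (- (x\<^sup>2) / c))) absolutely_integrable_on {0<..}
       \<and> integral {0<..} (\<lambda>x::real. of_real x powr (a - 1) * of_real (exp (- (x\<^sup>2) / c)))
           = of_real c powr (a / 2) * Gamma (a / 2) / 2"
proof -
  define G where "G = (\<lambda>u::real. of_real u powr (a/2 - 1) / of_real (exp u) :: complex)"
  define T where "T = (\<lambda>x::real. of_real x powr (a - 1) * of_real (exp (- (x\<^sup>2) / c)) :: complex)"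
  define K where "K = 2 * complex_of_real c powr (- a/2)"
  have K0: "K \<noteq> 0" using c by (simp add: K_def)
  have a2: "Re (a/2) > 0" using a by simp
  have G1: "G absolutely_integrable_on {0<..}"
    unfolding G_def using absolutely_integrable_Gamma_integral'[OF a2] by simp
  have G2: "integral {0<..} G = Gamma (a/2)"
    unfolding G_def using Gamma_integral_complex'[OF a2] by (simp add: integral_unique)
  define g where "g = (\<lambda>x::real. x\<^sup>2 / c)"
  define g' where "g' = (\<lambda>x::real. 2 * x / c)"
  have der: "(g has_field_derivative g' x) (at x within {0<..})" for x
    unfolding g_def g'_def using c by (auto intro!: derivative_eq_intros)
  have inj: "inj_on g {0<..}"
    unfolding g_def inj_on_def using c by (auto simp: power2_eq_iff_nonneg)
  have img: "g ` {0<..} = {0<..}"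
  proof safe
    fix u :: real assume u: "u > 0"
    have "g (sqrt (c * u)) = u" unfolding g_def using c u by simp
    moreover have "sqrt (c*u) > 0" using c u by simp
    ultimately show "u \<in> g ` {0<..}" by (metis greaterThan_iff image_eqI)
  qed (use c in \<open>auto simp: g_def\<close>)
  have cv: "(\<lambda>x. \<bar>g' x\<bar> *\<^sub>R G (g x)) absolutely_integrable_on {0<..} \<and>
            integral {0<..} (\<lambda>x. \<bar>g' x\<bar> *\<^sub>R G (g x)) = Gamma (a/2)"
    using has_absolute_integral_change_of_variables_real[OF _ der inj, of G "Gamma (a/2)"] G1 G2 img
    by simp
  have eq: "\<bar>g' x\<bar> *\<^sub>R G (g x) = K * T x" if x: "x \<in> {0<..}" for x
    using gm_eq[OF c, of x a] x unfolding K_def T_def g_def g'_def G_def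
    by (simp add: scaleR_conv_of_real)
  have "set_integrable lebesgue {0<..} (\<lambda>x. K * T x)"
  proof -
    have "set_integrable lebesgue {0<..} (\<lambda>x. \<bar>g' x\<bar> *\<^sub>R G (g x)) = set_integrable lebesgue {0<..} (\<lambda>x. K * T x)"
      by (rule set_integrable_cong) (auto simp: eq)
    then show ?thesis using cv by simp
  qed
  hence T1: "T absolutely_integrable_on {0<..}" using K0 by simp
  have "Gamma (a/2) = integral {0<..} (\<lambda>x. K * T x)"
    using cv integral_cong[of "{0<..}" "\<lambda>x. \<bar>g' x\<bar> *\<^sub>R G (g x)" "\<lambda>x. K * T x"] eq by simp
  also have "\<dots> = K * integral {0<..} T"
    using set_lebesgue_integral_eq_integral(2)[OF T1] 
      set_lebesgue_integral_eq_integral(2)[OF set_integrable_mult_right[OF T1, of K]]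
    by (metis set_integral_mult_right)
  finally have "integral {0<..} T = Gamma (a/2) / K" using K0 by (simp add: field_simps)
  also have "\<dots> = of_real c powr (a / 2) * Gamma (a / 2) / 2"
    unfolding K_def by (simp add: powr_minus field_simps)
  finally show ?thesis using T1 unfolding T_def by simp
qed

lemma lebesgue_set_integrable_lborel:
  fixes f :: "real \<Rightarrow> complex"
  assumes "set_integrable lebesgue S f" "set_borel_measurable borel S f"
  shows "set_integrable lborel S f"
  using assms integrable_completion[of "\<lambda>x. indicator S x *\<^sub>R f x" lborel]
  unfolding set_integrable_def set_borel_measurable_def by simp

lemma gauss_mellin:
  fixes a :: complex and c :: real
  assumes a: "Re a > 0" and c: "c > 0"
  shows "set_integrable lborel {0<..} (\<lambda>x::real. of_real x powr (a - 1) * of_real (exp (- (x\<^sup>2) / c)))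
       \<and> (LBINT x:{0<..}. of_real x powr (a - 1) * of_real (exp (- (x\<^sup>2) / c)))
           = of_real c powr (a / 2) * Gamma (a / 2) / 2"
proof -
  have m: "set_borel_measurable borel {0<..} (\<lambda>x::real. of_real x powr (a - 1) * of_real (exp (- (x\<^sup>2) / c)))"
    by (rule set_measurable_continuous_on) (use c in \<open>auto intro!: continuous_intros\<close>)
  have L: "set_integrable lborel {0<..} (\<lambda>x::real. of_real x powr (a - 1) * of_real (exp (- (x\<^sup>2) / c)))"
    using gauss_mellin_HK[OF a c] m lebesgue_set_integrable_lborel by blast
  show ?thesis using L set_borel_integral_eq_integral(2)[OF L] gauss_mellin_HK[OF a c] by simp
qed



lemma bessel_mellin:
  fixes \<gamma> s :: real and b :: complex
  assumes g: "\<gamma> > 0" and s: "s > 0" and b: "Re b > 1 - \<gamma>"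
  shows "set_integrable lborel {0<..} (\<lambda>r::real. of_real r powr (b - 1) * of_real (bessel_density \<gamma> r s))
    \<and> (LBINT r:{0<..}. of_real r powr (b - 1) * of_real (bessel_density \<gamma> r s))
      = of_real (2 * s) powr ((b - 1) / 2) * Gamma ((of_real \<gamma> + b - 1) / 2) / of_real (Gamma (\<gamma> / 2))"
proof -
  define a where "a = b + of_real \<gamma> - 1"
  have a: "Re a > 0" using b by (simp add: a_def)
  define C where "C = complex_of_real (2 / ((2 * s) powr (\<gamma>/2) * Gamma (\<gamma>/2)))"
  have GP: "Gamma (\<gamma>/2) > 0" using g by (simp add: Gamma_real_pos)
  have C0: "C \<noteq> 0" using GP s by (simp add: C_def)
  have eq: "of_real r powr (b - 1) * of_real (bessel_density \<gamma> r s)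
      = C * (of_real r powr (a - 1) * of_real (exp (- (r\<^sup>2) / (2 * s))))" if r: "r \<in> {0<..}" for r
  proof -
    have r0: "r > 0" using r by simp
    have "bessel_density \<gamma> r s = (2 / ((2 * s) powr (\<gamma>/2) * Gamma (\<gamma>/2))) * r powr (\<gamma> - 1) * exp (- (r\<^sup>2) / (2 * s))"
      unfolding bessel_density_def by simp
    hence "complex_of_real (bessel_density \<gamma> r s) = C * of_real (r powr (\<gamma> - 1)) * of_real (exp (- (r\<^sup>2) / (2 * s)))"
      by (simp add: C_def)
    also have "complex_of_real (r powr (\<gamma> - 1)) = of_real r powr (of_real \<gamma> - 1)"
      using r0 powr_of_real[of r "\<gamma> - 1"] by simp
    finally have "of_real r powr (b - 1) * of_real (bessel_density \<gamma> r s)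
       = C * ((of_real r powr (b - 1) * of_real r powr (of_real \<gamma> - 1)) * of_real (exp (- (r\<^sup>2) / (2 * s))))"
      by (simp add: algebra_simps)
    also have "of_real r powr (b - 1) * of_real r powr (of_real \<gamma> - 1) = of_real r powr (a - 1)"
      by (simp add: powr_add[symmetric] a_def algebra_simps)
    finally show ?thesis .
  qed
  have c2: "2 * s > 0" using s by simp
  note GM = gauss_mellin[OF a c2]
  have I1: "set_integrable lborel {0<..} (\<lambda>r::real. C * (of_real r powr (a - 1) * of_real (exp (- (r\<^sup>2) / (2 * s)))))"
    using GM by simp
  have I: "set_integrable lborel {0<..} (\<lambda>r::real. of_real r powr (b - 1) * of_real (bessel_density \<gamma> r s))"
  proof -
    have "set_integrable lborel {0<..} (\<lambda>r::real. of_real r powr (b - 1) * of_real (bessel_density \<gamma> r s))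
      = set_integrable lborel {0<..} (\<lambda>r::real. C * (of_real r powr (a - 1) * of_real (exp (- (r\<^sup>2) / (2 * s)))))"
      by (rule set_integrable_cong) (auto simp: eq)
    then show ?thesis using I1 by simp
  qed
  have "(LBINT r:{0<..}. of_real r powr (b - 1) * of_real (bessel_density \<gamma> r s))
      = (LBINT r:{0<..}. C * (of_real r powr (a - 1) * of_real (exp (- (r\<^sup>2) / (2 * s)))))"
    by (rule set_lebesgue_integral_cong) (auto simp: eq)
  also have "\<dots> = C * (of_real (2 * s) powr (a / 2) * Gamma (a / 2) / 2)"
    using GM by simp
  also have "of_real (2 * s) powr (a / 2) = of_real (2 * s) powr ((b - 1) / 2) * of_real (2 * s) powr (of_real (\<gamma>/2))"
  proof -
    have "a / 2 = (b - 1) / 2 + of_real (\<gamma>/2)" by (simp add: a_def field_simps)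
    then show ?thesis by (simp only: powr_add)
  qed
  also have "complex_of_real (2 * s) powr (of_real (\<gamma>/2)) = of_real ((2 * s) powr (\<gamma>/2))"
    using c2 powr_of_real[of "2 * s" "\<gamma>/2"] by (simp only: less_imp_le)
  also have "a / 2 = (of_real \<gamma> + b - 1) / 2" by (simp add: a_def algebra_simps)
  finally show ?thesis using I GP s by (simp add: C_def field_simps)
qed



lemma complex_set_integral_of_real:
  fixes f :: "real \<Rightarrow> real"
  assumes "set_integrable lborel A (\<lambda>x. complex_of_real (f x))"
  shows "set_integrable lborel A f \<and> complex_of_real (LBINT x:A. f x) = (LBINT x:A. complex_of_real (f x))"
proof -
  have e: "(\<lambda>x. indicator A x *\<^sub>R complex_of_real (f x)) = (\<lambda>x. complex_of_real (indicator A x *\<^sub>R f x))"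
    by (auto simp: indicator_def)
  show ?thesis using assms unfolding set_integrable_def set_lebesgue_integral_def e
      complex_of_real_integrable_eq integral_complex_of_real by simp
qed

lemma bessel_mellin_real:
  fixes \<gamma> s \<beta> :: real
  assumes g: "\<gamma> > 0" and s: "s > 0" and b: "\<beta> > 1 - \<gamma>"
  shows "set_integrable lborel {0<..} (\<lambda>r::real. r powr (\<beta> - 1) * bessel_density \<gamma> r s)
    \<and> (LBINT r:{0<..}. r powr (\<beta> - 1) * bessel_density \<gamma> r s)
      = (2 * s) powr ((\<beta> - 1) / 2) * Gamma ((\<gamma> + \<beta> - 1) / 2) / Gamma (\<gamma> / 2)"
proof -
  have b': "Re (of_real \<beta>) > 1 - \<gamma>" using b by simp
  note M = bessel_mellin[OF g s b']
  have eq: "of_real r powr (of_real \<beta> - 1) * of_real (bessel_density \<gamma> r s)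
      = complex_of_real (r powr (\<beta> - 1) * bessel_density \<gamma> r s)" if "r \<in> {0<..}" for r
    using that powr_of_real[of r "\<beta> - 1"] by simp
  have I: "set_integrable lborel {0<..} (\<lambda>r. complex_of_real (r powr (\<beta> - 1) * bessel_density \<gamma> r s))"
  proof -
    have "set_integrable lborel {0<..} (\<lambda>r::real. complex_of_real r powr (of_real \<beta> - 1) * of_real (bessel_density \<gamma> r s))
      = set_integrable lborel {0<..} (\<lambda>r. complex_of_real (r powr (\<beta> - 1) * bessel_density \<gamma> r s))"
      by (rule set_integrable_cong) (auto simp: eq)
    then show ?thesis using M by simp
  qed
  note R = complex_set_integral_of_real[OF I]
  have "complex_of_real (LBINT r:{0<..}. r powr (\<beta> - 1) * bessel_density \<gamma> r s)
     = (LBINT r:{0<..}. complex_of_real r powr (of_real \<beta> - 1) * of_real (bessel_density \<gamma> r s))"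
    using R by (simp add: set_lebesgue_integral_cong eq)
  also have "\<dots> = of_real (2 * s) powr ((of_real \<beta> - 1) / 2) * Gamma ((of_real \<gamma> + of_real \<beta> - 1) / 2) / of_real (Gamma (\<gamma> / 2))"
    using M by simp
  also have "of_real (2 * s) powr ((of_real \<beta> - 1) / 2) = complex_of_real ((2 * s) powr ((\<beta> - 1) / 2))"
    using s powr_of_real[of "2 * s" "(\<beta> - 1) / 2"] by simp
  also have "Gamma ((of_real \<gamma> + of_real \<beta> - 1) / 2) = complex_of_real (Gamma ((\<gamma> + \<beta> - 1) / 2))"
    using Gamma_complex_of_real[of "(\<gamma> + \<beta> - 1) / 2"] by simp
  finally have "complex_of_real (LBINT r:{0<..}. r powr (\<beta> - 1) * bessel_density \<gamma> r s)
     = complex_of_real ((2 * s) powr ((\<beta> - 1) / 2) * Gamma ((\<gamma> + \<beta> - 1) / 2) / Gamma (\<gamma> / 2))"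
    by simp
  then show ?thesis using R by (simp only: of_real_eq_iff)
qed



lemma bessel_density_nonneg: "\<gamma> > 0 \<Longrightarrow> s > 0 \<Longrightarrow> bessel_density \<gamma> r s \<ge> 0"
  unfolding bessel_density_def
  by (auto intro!: divide_nonneg_pos mult_nonneg_nonneg Gamma_real_pos)

lemma meas_F:
  fixes \<eta> :: complex and \<gamma> t :: real
  assumes t: "t > 0" and g: "\<gamma> > 0"
  shows "(\<lambda>(s,r). if s > 0 \<and> r > 0 then complex_of_real r powr (\<eta> - 1) * of_real (bessel_density \<gamma> r s * bessel_density \<gamma> s t) else 0)
     \<in> borel_measurable (lborel \<Otimes>\<^sub>M lborel)"
proof -
  define S where "S = ({0<..} \<times> {0<..} :: (real \<times> real) set)"
  have eq: "(\<lambda>(s,r). if s > 0 \<and> r > 0 then complex_of_real r powr (\<eta> - 1) * of_real (bessel_density \<gamma> r s * bessel_density \<gamma> s t) else 0)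
    = (\<lambda>x. indicator S x *\<^sub>R (complex_of_real (snd x) powr (\<eta> - 1) * of_real (bessel_density \<gamma> (snd x) (fst x) * bessel_density \<gamma> (fst x) t)))"
    by (auto simp: S_def indicator_def fun_eq_iff)
  have "continuous_on S (\<lambda>x. complex_of_real (snd x) powr (\<eta> - 1) * of_real (bessel_density \<gamma> (snd x) (fst x) * bessel_density \<gamma> (fst x) t))"
  proof -
    have GP: "Gamma (\<gamma>/2) > 0" using g by (simp add: Gamma_real_pos)
    show ?thesis
      unfolding bessel_density_def S_def using t GP
      by (intro continuous_intros) auto
  qed
  moreover have "S \<in> sets borel" unfolding S_def by (intro borel_open open_Times open_greaterThan)
  ultimately show ?thesis unfolding eq lborel_prod
    using borel_measurable_continuous_on_indicator by simp
qed

lemma pow_combine: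
  fixes \<eta> :: complex and t :: real
  assumes t: "t > 0"
  shows "complex_of_real 2 powr ((\<eta> - 1) / 2) * complex_of_real (2 * t) powr ((\<eta> - 1) / 4)
       = complex_of_real (2^3 * t) powr ((\<eta> - 1) / 4)"
proof -
  have l8': "ln (8::real) = 3 * ln 2" using ln_realpow[of 2 3] by simp
  have l': "ln (2^3 * t) = 2 * ln 2 + ln (2 * t)"
    using t l8' by (simp add: ln_mult)
  have l: "complex_of_real (ln (2^3 * t)) = 2 * of_real (ln 2) + of_real (ln (2 * t))"
    unfolding l' by simp
  have p1: "complex_of_real 2 powr ((\<eta>-1)/2) = exp ((\<eta>-1)/2 * of_real (ln 2))" by (rule cpowr_pos) simp
  have p2: "complex_of_real (2*t) powr ((\<eta>-1)/4) = exp ((\<eta>-1)/4 * of_real (ln (2*t)))" using t by (intro cpowr_pos) simp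
  have p3: "complex_of_real (2^3*t) powr ((\<eta>-1)/4) = exp ((\<eta>-1)/4 * of_real (ln (2^3*t)))" using t by (intro cpowr_pos) simp
  have ar: "(\<eta>-1)/2 * of_real (ln 2) + (\<eta>-1)/4 * of_real (ln (2*t)) = (\<eta>-1)/4 * (2 * complex_of_real (ln 2) + of_real (ln (2*t)))"
    by (simp add: field_simps)
  show ?thesis unfolding p1 p2 p3 l exp_add[symmetric] ar ..
qed

theorem mainTheorem1:
  fixes \<gamma> t :: real and \<eta> :: complex
  assumes "\<gamma> > 0" and "t > 0" and "Re \<eta> > 1 - \<gamma>"
  shows "set_integrable lborel {0<..}
           (\<lambda>r::real. of_real r powr (\<eta> - 1) * of_real (iterated_bessel_density \<gamma> r t))
       \<and> (LBINT r:{0<..}. of_real r powr (\<eta> - 1) * of_real (iterated_bessel_density \<gamma> r t))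
         = of_real (2^3 * t) powr ((\<eta> - 1) / 4)
           * Gamma ((of_real \<gamma> + \<eta> - 1) / 2) * Gamma ((2 * of_real \<gamma> + \<eta> - 1) / 4)
           / of_real ((Gamma (\<gamma> / 2))\<^sup>2)"
proof -
  note g = assms(1) and t = assms(2) and e = assms(3)
  define P where "P = bessel_density \<gamma>"
  define f2 where "f2 = (\<lambda>s r::real. if s > 0 \<and> r > 0 then complex_of_real r powr (\<eta> - 1) * of_real (P r s * P s t) else 0)"
  define K where "K = Gamma (\<gamma> / 2)"
  have GP: "K > 0" using g by (simp add: Gamma_real_pos K_def)
  define V where "V = (\<lambda>s::real. of_real (2 * s) powr ((\<eta> - 1) / 2) * Gamma ((of_real \<gamma> + \<eta> - 1) / 2) / of_real K)"
  define W where "W = (\<lambda>s::real. (2 * s) powr ((Re \<eta> - 1) / 2) * Gamma ((\<gamma> + Re \<eta> - 1) / 2) / K)"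
  have meas: "case_prod f2 \<in> borel_measurable (lborel \<Otimes>\<^sub>M lborel)"
    using meas_F[OF t g, of \<eta>] unfolding f2_def P_def by simp
  have A: "integrable lborel (\<lambda>r. f2 s r) \<and> (\<integral>r. f2 s r \<partial>lborel) = indicator {0<..} s *\<^sub>R (of_real (P s t) * V s)" for s
  proof (cases "s > 0")
    case True
    note M = bessel_mellin[OF g True e]
    have fe: "f2 s r = of_real (P s t) * (indicator {0<..} r *\<^sub>R (of_real r powr (\<eta> - 1) * of_real (P r s)))" for r
      using True by (auto simp: f2_def indicator_def)
    from M have I: "integrable lborel (\<lambda>r. indicator {0<..} r *\<^sub>R (of_real r powr (\<eta> - 1) * of_real (P r s)))"
      and E: "(\<integral>r. indicator {0<..} r *\<^sub>R (of_real r powr (\<eta> - 1) * of_real (P r s)) \<partial>lborel) = V s"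
      unfolding set_integrable_def set_lebesgue_integral_def by (simp_all add: V_def K_def P_def)
    show ?thesis unfolding fe
      using integrable_mult_right[OF I, of "of_real (P s t)"] True
      by (simp only: integral_mult_right_zero E) simp
  next
    case False
    then show ?thesis by (simp add: f2_def)
  qed
  have N: "(\<integral>r. norm (f2 s r) \<partial>lborel) = indicator {0<..} s * (P s t * W s)" for s
  proof (cases "s > 0")
    case True
    have e': "Re \<eta> > 1 - \<gamma>" using e by simp
    note M = bessel_mellin_real[OF g True e']
    have fe: "norm (f2 s r) = P s t * (indicator {0<..} r *\<^sub>R (r powr (Re \<eta> - 1) * P r s))" for r
      using True g t by (auto simp: f2_def indicator_def norm_mult norm_powr_real_powr P_def
          bessel_density_nonneg abs_mult)
    from M have E: "(\<integral>r. indicator {0<..} r *\<^sub>R (r powr (Re \<eta> - 1) * P r s) \<partial>lborel) = W s"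
      unfolding set_integrable_def set_lebesgue_integral_def by (simp_all add: W_def K_def P_def)
    show ?thesis unfolding fe using True
      by (simp only: integral_mult_right_zero E) simp
  next
    case False
    then show ?thesis by (simp add: f2_def)
  qed
  define \<beta> where "\<beta> = (Re \<eta> + 1) / 2"
  have b': "\<beta> > 1 - \<gamma>" using e g by (simp add: \<beta>_def)
  note MR = bessel_mellin_real[OF g t b']
  have I1: "integrable lborel (\<lambda>s. \<integral>r. norm (f2 s r) \<partial>lborel)"
  proof -
    define C where "C = 2 powr ((Re \<eta> - 1) / 2) * Gamma ((\<gamma> + Re \<eta> - 1) / 2) / K"
    have "(\<lambda>s. \<integral>r. norm (f2 s r) \<partial>lborel) = (\<lambda>s. C * (indicator {0<..} s *\<^sub>R (s powr (\<beta> - 1) * P s t)))"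
    proof
      fix s :: real
      show "(\<integral>r. norm (f2 s r) \<partial>lborel) = C * (indicator {0<..} s *\<^sub>R (s powr (\<beta> - 1) * P s t))"
      proof (cases "s > 0")
        case True
        have bb: "\<beta> - 1 = (Re \<eta> - 1) / 2" by (simp add: \<beta>_def field_simps)
        show ?thesis using True unfolding N W_def C_def bb
          by (simp add: powr_mult)
      qed (simp add: N)
    qed
    then show ?thesis using MR unfolding set_integrable_def by (simp add: P_def)
  qed
  have int2: "integrable (lborel \<Otimes>\<^sub>M lborel) (case_prod f2)"
    by (rule lborel_pair.Fubini_integrable) (use meas I1 A in auto)
  have swap: "integrable lborel (\<lambda>r. \<integral>s. f2 s r \<partial>lborel)"
    using lborel_pair.integrable_fst'[OF lborel_pair.integrable_product_swap[OF int2]] by simp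
  have link: "(\<integral>s. f2 s r \<partial>lborel) = indicator {0<..} r *\<^sub>R (of_real r powr (\<eta> - 1) * of_real (iterated_bessel_density \<gamma> r t))" for r
  proof (cases "r > 0")
    case True
    have fe: "f2 s r = of_real r powr (\<eta> - 1) * of_real (indicator {0<..} s * (P r s * P s t))" for s
      using True by (auto simp: f2_def indicator_def)
    show ?thesis using True unfolding fe integral_mult_right_zero integral_complex_of_real
        iterated_bessel_density_def set_lebesgue_integral_def
      by (simp add: P_def)
  next
    case False
    then show ?thesis by (simp add: f2_def)
  qed
  have part1: "set_integrable lborel {0<..}
           (\<lambda>r::real. of_real r powr (\<eta> - 1) * of_real (iterated_bessel_density \<gamma> r t))"
    using swap unfolding set_integrable_def link[symmetric] .
  have "(LBINT r:{0<..}. of_real r powr (\<eta> - 1) * of_real (iterated_bessel_density \<gamma> r t))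
      = (\<integral>r. \<integral>s. f2 s r \<partial>lborel \<partial>lborel)"
    unfolding set_lebesgue_integral_def link ..
  also have "\<dots> = (\<integral>s. \<integral>r. f2 s r \<partial>lborel \<partial>lborel)"
    by (rule lborel_pair.Fubini_integral) (rule int2)
  also have "\<dots> = (\<integral>s. indicator {0<..} s *\<^sub>R (of_real (P s t) * V s) \<partial>lborel)"
    using A by simp
  also have "\<dots> = of_real (2^3 * t) powr ((\<eta> - 1) / 4)
           * Gamma ((of_real \<gamma> + \<eta> - 1) / 2) * Gamma ((2 * of_real \<gamma> + \<eta> - 1) / 4)
           / of_real ((Gamma (\<gamma> / 2))\<^sup>2)"
  proof -
    define b where "b = (\<eta> + 1) / 2"
    have bb: "b - 1 = (\<eta> - 1) / 2" by (simp add: b_def field_simps)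
    have b: "Re b > 1 - \<gamma>" using e g by (simp add: b_def)
    note MB = bessel_mellin[OF g t b]
    define D where "D = complex_of_real 2 powr ((\<eta> - 1) / 2) * Gamma ((of_real \<gamma> + \<eta> - 1) / 2) / of_real K"
    have pw: "(\<lambda>s. indicator {0<..} s *\<^sub>R (of_real (P s t) * V s))
       = (\<lambda>s. D * (indicator {0<..} s *\<^sub>R (of_real s powr (b - 1) * of_real (bessel_density \<gamma> s t))))"
    proof
      fix s :: real
      show "indicator {0<..} s *\<^sub>R (of_real (P s t) * V s)
         = D * (indicator {0<..} s *\<^sub>R (of_real s powr (b - 1) * of_real (bessel_density \<gamma> s t)))"
      proof (cases "s > 0")
        case True
        have "complex_of_real (2 * s) powr ((\<eta> - 1) / 2) = of_real 2 powr ((\<eta> - 1) / 2) * of_real s powr ((\<eta> - 1) / 2)"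
          using True by (simp only: of_real_mult) (rule powr_times_real, auto)
        then show ?thesis using True unfolding V_def D_def bb by (simp add: P_def)
      qed simp
    qed
    have "(\<integral>s. indicator {0<..} s *\<^sub>R (of_real (P s t) * V s) \<partial>lborel)
       = D * (of_real (2 * t) powr ((b - 1) / 2) * Gamma ((of_real \<gamma> + b - 1) / 2) / of_real K)"
      unfolding pw integral_mult_right_zero using MB by (simp add: set_lebesgue_integral_def K_def)
    also have "(b - 1) / 2 = (\<eta> - 1) / 4" by (simp add: b_def field_simps)
    also have "(of_real \<gamma> + b - 1) / 2 = (2 * of_real \<gamma> + \<eta> - 1) / 4" by (simp add: b_def field_simps)
    finally show ?thesis using GP unfolding D_def pow_combine[OF t, symmetric, of \<eta>]
      by (simp add: K_def field_simps power2_eq_square)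
  qed
  finally show ?thesis using part1 by simp
qed


end
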